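(* Let $(W,S)$ be a Coxeter system of finite rank and $S'$ another set of Coxeter generators of $W$ with $S'\subseteq S^W$. Let $A\subseteq S$ be an irreducible simplex, let $A',\bar A'\subseteq S'$ be irreducible simplices, and let $u,\bar u\in W$ satisfy $\langle A\rangle=u\langle A'\rangle u^{-1}=\bar u\langle\bar A'\rangle\bar u^{-1}$. Let $\alpha:(\langle A\rangle,A)\to(\langle A'\rangle,A')$ and $\bar\alpha:(\langle A\rangle,A)\to(\langle\bar A'\rangle,\bar A')$ be isomorphisms. Then $u_*\alpha:\langle A\rangle\to\langle A\rangle$ is an inner-by-graph automorphism of $(\langle A\rangle,A)$ if and only if $\bar u_*\bar\alpha:\langle A\rangle\to\langle A\rangle$ is an inner-by-graph automorphism of $(\langle A\rangle,A)$.
   Context: Coxeter system $(W,S)$: $W=\langle S\mid (st)^{m(s,t)}\ (m(s,t)<\infty)\rangle$, $m(s,s)=1$, $m(s,t)=m(t,s)\in\{2,\dots,\infty\}$. $S^W=\{wsw^{-1}\}$. A simplex is $A\subseteq S$ with all $m(s,t)<\infty$; $A$ is irreducible if the graph on $A$ with edges $m(s,t)\ge3$ is connected. An isomorphism $(\langle A\rangle,A)\to(\langle A'\rangle,A')$ is a group isomorphism mapping $A$ onto $A'$. $u_*$ is $w\mapsto uwu^{-1}$. Inner-by-graph automorphism of $(\langle A\rangle,A)$: composite of an inner automorphism of $\langle A\rangle$ and an automorphism mapping $A$ onto $A$. *)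

theory Defs
  imports "HOL-Algebra.Algebra"
begin

definition word_prod :: "('a, 'b) monoid_scheme \<Rightarrow> 'a list \<Rightarrow> 'a" where
  "word_prod G w = foldr (\<lambda>x y. x \<otimes>\<^bsub>G\<^esub> y) w \<one>\<^bsub>G\<^esub>"

text \<open>Coxeter matrix entry m(s,t) = order of st in G (0 encodes infinity).\<close>
definition cox_m :: "('a, 'b) monoid_scheme \<Rightarrow> 'a \<Rightarrow> 'a \<Rightarrow> nat" where
  "cox_m G s t = group.ord G (s \<otimes>\<^bsub>G\<^esub> t)"

text \<open>Relator words (st)^{m(s,t)} for m(s,t) finite (including s^2 for s = t).\<close>
definition cox_relators :: "('a, 'b) monoid_scheme \<Rightarrow> 'a set \<Rightarrow> 'a list set" where
  "cox_relators G S = {concat (replicate (cox_m G s t) [s, t]) | s t. s \<in> S \<and> t \<in> S \<and> cox_m G s t \<noteq> 0}"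

definition cox_move :: "('a, 'b) monoid_scheme \<Rightarrow> 'a set \<Rightarrow> 'a list \<Rightarrow> 'a list \<Rightarrow> bool" where
  "cox_move G S v w \<longleftrightarrow> (\<exists>x y r. r \<in> cox_relators G S \<and>
      ((v = x @ r @ y \<and> w = x @ y) \<or> (v = x @ y \<and> w = x @ r @ y)))"

text \<open>(G,S) is a Coxeter system: S is a set of involutions generating G, and G is presented
  by S with the relations s^2 = 1, (st)^{m(s,t)} = 1 (m(s,t) finite): every word in S
  representing 1 is reducible to the empty word by the defining relations.\<close>
definition coxeter_system :: "('a, 'b) monoid_scheme \<Rightarrow> 'a set \<Rightarrow> bool" where
  "coxeter_system G S \<longleftrightarrow> group G \<and> S \<subseteq> carrier G \<and> \<one>\<^bsub>G\<^esub> \<notin> S \<and>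
     (\<forall>s\<in>S. s \<otimes>\<^bsub>G\<^esub> s = \<one>\<^bsub>G\<^esub>) \<and> generate G S = carrier G \<and>
     (\<forall>w \<in> lists S. word_prod G w = \<one>\<^bsub>G\<^esub> \<longrightarrow> (cox_move G S)\<^sup>*\<^sup>* w [])"

definition conj_closure :: "('a, 'b) monoid_scheme \<Rightarrow> 'a set \<Rightarrow> 'a set" where
  "conj_closure G S = {w \<otimes>\<^bsub>G\<^esub> s \<otimes>\<^bsub>G\<^esub> inv\<^bsub>G\<^esub> w | w s. w \<in> carrier G \<and> s \<in> S}"

definition simplex :: "('a, 'b) monoid_scheme \<Rightarrow> 'a set \<Rightarrow> 'a set \<Rightarrow> bool" where
  "simplex G S A \<longleftrightarrow> A \<subseteq> S \<and> (\<forall>s\<in>A. \<forall>t\<in>A. cox_m G s t \<noteq> 0)"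

definition irreducible_set :: "('a, 'b) monoid_scheme \<Rightarrow> 'a set \<Rightarrow> bool" where
  "irreducible_set G A \<longleftrightarrow> A \<noteq> {} \<and>
     (\<forall>s\<in>A. \<forall>t\<in>A. (s, t) \<in> {(x, y). x \<in> A \<and> y \<in> A \<and> cox_m G x y \<ge> 3}\<^sup>*)"

definition spgrp :: "('a, 'b) monoid_scheme \<Rightarrow> 'a set \<Rightarrow> ('a, 'b) monoid_scheme" where
  "spgrp G A = G\<lparr>carrier := generate G A\<rparr>"

definition pair_iso :: "('a, 'b) monoid_scheme \<Rightarrow> 'a set \<Rightarrow> 'a set \<Rightarrow> ('a \<Rightarrow> 'a) \<Rightarrow> bool" where
  "pair_iso G A A' f \<longleftrightarrow> f \<in> iso (spgrp G A) (spgrp G A') \<and> f ` A = A'"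

definition conjug :: "('a, 'b) monoid_scheme \<Rightarrow> 'a \<Rightarrow> 'a \<Rightarrow> 'a" where
  "conjug G u w = u \<otimes>\<^bsub>G\<^esub> w \<otimes>\<^bsub>G\<^esub> inv\<^bsub>G\<^esub> u"

definition inner_by_graph :: "('a, 'b) monoid_scheme \<Rightarrow> 'a set \<Rightarrow> ('a \<Rightarrow> 'a) \<Rightarrow> bool" where
  "inner_by_graph G A \<phi> \<longleftrightarrow> (\<exists>g \<in> generate G A. \<exists>\<sigma>. pair_iso G A A \<sigma> \<and>
      (\<forall>x \<in> generate G A. \<phi> x = conjug G g (\<sigma> x)))"

end

theory Submission imports Defs begin

primrec refl_list :: "('a, 'b) monoid_scheme \<Rightarrow> 'a list \<Rightarrow> 'a list" where
  "refl_list G [] = []"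
| "refl_list G (s # w) = s # map (conjug G s) (refl_list G w)"

primrec alt :: "'a \<Rightarrow> 'a \<Rightarrow> nat \<Rightarrow> 'a list" where
  "alt s t 0 = []"
| "alt s t (Suc k) = s # alt t s k"

definition par :: "('a, 'b) monoid_scheme \<Rightarrow> 'a list \<Rightarrow> 'a \<Rightarrow> bool" where
  "par G w z = odd (count_list (refl_list G w) z)"

lemma count_distinct: "distinct xs \<Longrightarrow> count_list xs x = (if x \<in> set xs then 1 else 0)"
  by (induct xs) auto

definition del :: "nat \<Rightarrow> 'a list \<Rightarrow> 'a list" where
  "del k w = take k w @ drop (Suc k) w"

lemma length_del: "k < length w \<Longrightarrow> length (del k w) = length w - 1"
  by (simp add: del_def)

lemma set_del: "set (del k w) \<subseteq> set w"
  unfolding del_def using set_take_subset set_drop_subset by fastforce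

lemma del_append1: "k < length x \<Longrightarrow> del k (x @ y) = del k x @ y"
  by (simp add: del_def)

lemma del_append2: "length x \<le> k \<Longrightarrow> del k (x @ y) = x @ del (k - length x) y"
  by (simp add: del_def Suc_diff_le)

lemma count_list_map_gen:
  assumes "\<forall>x\<in>set L. (f x = t) = (x = h)"
  shows "count_list (map f L) t = count_list L h"
  using assms
proof (induct L)
  case Nil then show ?case by simp
next
  case (Cons a L)
  have e: "(f a = t) = (a = h)" using Cons(2) by simp
  have "count_list (map f L) t = count_list L h" using Cons by simp
  then show ?case using e by simp
qed

lemma lists_del: "w \<in> lists A \<Longrightarrow> del k w \<in> lists A"
  using set_del[of k w] by blast

lemma not_distinct_nth: "\<not> distinct xs \<Longrightarrow> \<exists>i j. i < j \<and> j < length xs \<and> xs ! i = xs ! j"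
  by (metis distinct_conv_nth linorder_neqE_nat)

locale coxs =
  fixes G (structure) and S
  assumes cs: "coxeter_system G S"
begin

lemma csD1: "group G"
  using cs unfolding coxeter_system_def by (elim conjE) assumption
lemma csD2: "S \<subseteq> carrier G"
  using cs unfolding coxeter_system_def by (elim conjE) assumption
lemma csD3: "\<one> \<notin> S"
  using cs unfolding coxeter_system_def by (elim conjE) assumption
lemma csD4: "\<forall>s\<in>S. s \<otimes> s = \<one>"
  using cs unfolding coxeter_system_def by (elim conjE) assumption
lemma csD5: "generate G S = carrier G"
  using cs unfolding coxeter_system_def by (elim conjE) assumption
lemma csD6: "\<forall>w \<in> lists S. word_prod G w = \<one> \<longrightarrow> (cox_move G S)\<^sup>*\<^sup>* w []"
  using cs unfolding coxeter_system_def by (elim conjE) assumption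

lemma grp: "group G" by (rule csD1)

sublocale group G by (rule grp)

lemma S_car: "S \<subseteq> carrier G" by (rule csD2)
lemma S_inv: "s \<in> S \<Longrightarrow> s \<otimes> s = \<one>" using csD4 by blast
lemma S_inv2: "s \<in> S \<Longrightarrow> inv s = s"
proof -
  assume s: "s \<in> S"
  then have "s \<in> carrier G" using S_car by blast
  then show "inv s = s" using S_inv[OF s] inv_equality by blast
qed
lemma pres: "w \<in> lists S \<Longrightarrow> word_prod G w = \<one> \<Longrightarrow> (cox_move G S)\<^sup>*\<^sup>* w []"
  using csD6 by blast
lemma gen_S: "generate G S = carrier G" by (rule csD5)

lemma wp_Nil[simp]: "word_prod G [] = \<one>" by (simp add: word_prod_def)
lemma wp_Cons[simp]: "word_prod G (x # w) = x \<otimes> word_prod G w" by (simp add: word_prod_def)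
lemma wp_car: "set w \<subseteq> carrier G \<Longrightarrow> word_prod G w \<in> carrier G" by (induct w) auto
lemma wp_append: "set x \<subseteq> carrier G \<Longrightarrow> set y \<subseteq> carrier G \<Longrightarrow>
   word_prod G (x @ y) = word_prod G x \<otimes> word_prod G y"
  by (induct x) (auto simp: m_assoc wp_car)

lemma lists_car: "w \<in> lists S \<Longrightarrow> set w \<subseteq> carrier G" using S_car by auto

lemma wp_rev: "w \<in> lists S \<Longrightarrow> word_prod G (rev w) = inv (word_prod G w)"
proof (induct w)
  case Nil then show ?case by simp
next
  case (Cons a w)
  have a: "a \<in> carrier G" "a \<in> S" using Cons S_car by auto
  have w: "set w \<subseteq> carrier G" "w \<in> lists S" using Cons lists_car by auto
  have "word_prod G (rev (a # w)) = word_prod G (rev w) \<otimes> word_prod G [a]"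
    using wp_append[of "rev w" "[a]"] w a by (simp only: rev.simps set_rev set_simps) blast
  also have "\<dots> = inv (word_prod G w) \<otimes> a"
  proof -
    have "word_prod G [a] = a" using a by simp
    moreover have "word_prod G (rev w) = inv (word_prod G w)" by (rule Cons.hyps[OF w(2)])
    ultimately show ?thesis by simp
  qed
  also have "\<dots> = inv (a \<otimes> word_prod G w)"
  proof -
    have "inv (a \<otimes> word_prod G w) = inv (word_prod G w) \<otimes> inv a"
      using a w wp_car by (intro inv_mult_group) auto
    then show ?thesis using S_inv2[OF a(2)] by simp
  qed
  finally show ?case by simp
qed

lemma cancel_l[simp]: "x \<in> carrier G \<Longrightarrow> z \<in> carrier G \<Longrightarrow> inv x \<otimes> (x \<otimes> z) = z"
  by (simp add: m_assoc[symmetric])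
lemma cancel_r[simp]: "x \<in> carrier G \<Longrightarrow> z \<in> carrier G \<Longrightarrow> x \<otimes> (inv x \<otimes> z) = z"
  by (simp add: m_assoc[symmetric])

lemma conj_car[simp]: "g \<in> carrier G \<Longrightarrow> x \<in> carrier G \<Longrightarrow> conjug G g x \<in> carrier G"
  by (simp add: conjug_def)
lemma conj_comp: "g \<in> carrier G \<Longrightarrow> h \<in> carrier G \<Longrightarrow> x \<in> carrier G \<Longrightarrow>
   conjug G g (conjug G h x) = conjug G (g \<otimes> h) x"
  by (simp add: conjug_def m_assoc inv_mult_group)
lemma conj_one[simp]: "x \<in> carrier G \<Longrightarrow> conjug G \<one> x = x"
  by (simp add: conjug_def)
lemma conj_inv_cancel: "g \<in> carrier G \<Longrightarrow> x \<in> carrier G \<Longrightarrow> conjug G g (conjug G (inv g) x) = x"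
  by (simp add: conj_comp)
lemma conj_inv_cancel2: "g \<in> carrier G \<Longrightarrow> x \<in> carrier G \<Longrightarrow> conjug G (inv g) (conjug G g x) = x"
  by (simp add: conj_comp)
lemma conj_mult: "g \<in> carrier G \<Longrightarrow> x \<in> carrier G \<Longrightarrow> y \<in> carrier G \<Longrightarrow>
   conjug G g (x \<otimes> y) = conjug G g x \<otimes> conjug G g y"
  by (simp add: conjug_def m_assoc)
lemma conj_eq_iff: "g \<in> carrier G \<Longrightarrow> x \<in> carrier G \<Longrightarrow> y \<in> carrier G \<Longrightarrow>
   (conjug G g x = y) = (x = conjug G (inv g) y)"
  by (metis conj_inv_cancel conj_inv_cancel2 inv_closed conj_car)

lemma Tl_car: "set w \<subseteq> carrier G \<Longrightarrow> set (refl_list G w) \<subseteq> carrier G"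
  by (induct w) auto

lemma Tl_length[simp]: "length (refl_list G w) = length w"
  by (induct w) auto

lemma Tl_append: "set x \<subseteq> carrier G \<Longrightarrow> set y \<subseteq> carrier G \<Longrightarrow>
  refl_list G (x @ y) = refl_list G x @ map (conjug G (word_prod G x)) (refl_list G y)"
proof (induct x)
  case Nil
  have "map (conjug G \<one>) (refl_list G y) = refl_list G y"
    using Tl_car[OF Nil(2)] by (intro map_idI) auto
  then show ?case by simp
next
  case (Cons a x)
  have "map (conjug G a) (map (conjug G (word_prod G x)) (refl_list G y))
     = map (conjug G (a \<otimes> word_prod G x)) (refl_list G y)"
  proof -
    have "a \<in> carrier G" "set x \<subseteq> carrier G" using Cons(2) by auto
    then show ?thesis using Tl_car[OF Cons(3)] conj_comp wp_car by auto
  qed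
  moreover have "refl_list G (x @ y) = refl_list G x @ map (conjug G (word_prod G x)) (refl_list G y)"
    using Cons by auto
  ultimately show ?case by simp
qed


lemma par_append:
  assumes x: "set x \<subseteq> carrier G" and y: "set y \<subseteq> carrier G" and z: "z \<in> carrier G"
  shows "par G (x @ y) z = (par G x z \<noteq> par G y (conjug G (inv (word_prod G x)) z))"
proof -
  have X: "word_prod G x \<in> carrier G" using x wp_car by blast
  have "count_list (map (conjug G (word_prod G x)) (refl_list G y)) z
      = count_list (refl_list G y) (conjug G (inv (word_prod G x)) z)"
  proof (rule count_list_map_gen, rule ballI)
    fix v assume "v \<in> set (refl_list G y)"
    then have "v \<in> carrier G" using Tl_car[OF y] by blast
    then show "(conjug G (word_prod G x) v = z) = (v = conjug G (inv (word_prod G x)) z)"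
      using conj_eq_iff X z by blast
  qed
  then show ?thesis unfolding par_def using Tl_append[OF x y] by simp
qed

lemma pow_swap: "s \<in> carrier G \<Longrightarrow> t \<in> carrier G \<Longrightarrow> s \<otimes> (t \<otimes> s) [^] (i::nat) = (s \<otimes> t) [^] i \<otimes> s"
proof (induct i)
  case 0 then show ?case by simp
next
  case (Suc i)
  have "s \<otimes> (t \<otimes> s) [^] Suc i = (s \<otimes> (t \<otimes> s) [^] i) \<otimes> (t \<otimes> s)"
    using Suc.prems by (simp add: m_assoc)
  also have "\<dots> = ((s \<otimes> t) [^] i \<otimes> (s \<otimes> t)) \<otimes> s" using Suc by (simp add: m_assoc[symmetric])
  finally show ?case by simp
qed

lemma Tl_alt: "s \<in> S \<Longrightarrow> t \<in> S \<Longrightarrow>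
   refl_list G (alt s t k) = map (\<lambda>i. (s \<otimes> t) [^] i \<otimes> s) [0..<k]"
proof (induct k arbitrary: s t)
  case 0 then show ?case by simp
next
  case (Suc k)
  have sc: "s \<in> carrier G" "t \<in> carrier G" using Suc S_car by auto
  have "refl_list G (alt s t (Suc k)) = s # map (conjug G s) (map (\<lambda>i. (t \<otimes> s) [^] i \<otimes> t) [0..<k])"
    using Suc by simp
  also have "map (conjug G s) (map (\<lambda>i. (t \<otimes> s) [^] i \<otimes> t) [0..<k])
      = map (\<lambda>i. (s \<otimes> t) [^] Suc i \<otimes> s) [0..<k]"
  proof -
    have key: "conjug G s ((t \<otimes> s) [^] i \<otimes> t) = (s \<otimes> t) [^] Suc i \<otimes> s" for i
    proof -
      have "conjug G s ((t \<otimes> s) [^] i \<otimes> t) = (s \<otimes> (t \<otimes> s) [^] i) \<otimes> t \<otimes> s"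
        using sc S_inv2[OF Suc(2)] by (simp add: conjug_def m_assoc)
      also have "\<dots> = (s \<otimes> t) [^] i \<otimes> (s \<otimes> t) \<otimes> s"
        using sc by (simp add: pow_swap m_assoc)
      finally show ?thesis by simp
    qed
    show ?thesis unfolding map_map by (rule map_cong[OF refl]) (simp add: key)
  qed
  finally show ?case using sc by (simp add: map_upt_Suc del: upt_Suc)
qed


lemma rel_alt: "concat (replicate m [s, t]) = alt s t (2 * m)"
  by (induct m) auto

lemma wp_rel: "s \<in> carrier G \<Longrightarrow> t \<in> carrier G \<Longrightarrow>
  word_prod G (concat (replicate m [s, t])) = (s \<otimes> t) [^] m"
proof (induct m)
  case 0 then show ?case by simp
next
  case (Suc m)
  have "word_prod G (concat (replicate (Suc m) [s, t])) = s \<otimes> (t \<otimes> (s \<otimes> t) [^] m)"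
    using Suc by simp
  also have "\<dots> = (s \<otimes> t) \<otimes> (s \<otimes> t) [^] m" using Suc.prems by (simp add: m_assoc)
  also have "\<dots> = (s \<otimes> t) [^] Suc m" by (rule nat_pow_Suc2[symmetric]) (use Suc.prems in simp)
  finally show ?case .
qed

lemma even_count_periodic:
  assumes per: "\<And>i. f (i + m) = f i"
  shows "even (count_list (map f [0..<2 * m]) x)"
proof -
  have "[0..<2 * m] = [0..<m] @ [m..<m + m]" using upt_add_eq_append[of 0 m m] by (simp add: mult_2)
  moreover have "map f [m..<m + m] = map f [0..<m]"
  proof -
    have "map f [m..<m + m] = map f (map (\<lambda>i. i + m) [0..<m])" by (simp only: map_add_upt)
    also have "\<dots> = map f [0..<m]" unfolding map_map by (rule map_cong[OF refl]) (simp add: per)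
    finally show ?thesis .
  qed
  ultimately have "count_list (map f [0..<2 * m]) x = 2 * count_list (map f [0..<m]) x" by simp
  then show ?thesis by simp
qed

lemma relator_props:
  assumes r: "r \<in> cox_relators G S"
  shows "r \<in> lists S" "word_prod G r = \<one>" "even (length r)" "\<And>z. \<not> par G r z"
proof -
  obtain s t where st: "r = concat (replicate (cox_m G s t) [s, t])" "s \<in> S" "t \<in> S"
    using r unfolding cox_relators_def by blast
  define m where "m = cox_m G s t"
  have sc: "s \<in> carrier G" "t \<in> carrier G" using st S_car by auto
  have ord: "(s \<otimes> t) [^] m = \<one>" unfolding m_def cox_m_def using sc by simp
  show "r \<in> lists S" using st by (auto split: if_splits)
  show "word_prod G r = \<one>" using st wp_rel[OF sc] ord m_def by simp
  have "length (alt s t k) = k" for k by (induct k arbitrary: s t) auto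
  then have "length r = 2 * cox_m G s t" by (simp only: st(1) rel_alt)
  then show "even (length r)" by simp
  show "\<not> par G r z" for z
  proof -
    have "refl_list G r = map (\<lambda>i. (s \<otimes> t) [^] i \<otimes> s) [0..<2 * m]"
      unfolding st(1) rel_alt m_def by (rule Tl_alt[OF st(2,3)])
    moreover have "even (count_list (map (\<lambda>i. (s \<otimes> t) [^] i \<otimes> s) [0..<2 * m]) z)"
    proof (rule even_count_periodic)
      fix i
      have "(s \<otimes> t) [^] (i + m) = (s \<otimes> t) [^] i \<otimes> (s \<otimes> t) [^] m"
        using sc by (simp add: nat_pow_mult)
      then show "(s \<otimes> t) [^] (i + m) \<otimes> s = (s \<otimes> t) [^] i \<otimes> s" using ord sc by simp
    qed
    ultimately show ?thesis unfolding par_def by simp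
  qed
qed

lemma par_rel_mid:
  assumes x: "x \<in> lists S" and y: "y \<in> lists S" and r: "r \<in> cox_relators G S" and z: "z \<in> carrier G"
  shows "par G (x @ r @ y) z = par G (x @ y) z"
proof -
  have xc: "set x \<subseteq> carrier G" and yc: "set y \<subseteq> carrier G" and rc: "set r \<subseteq> carrier G"
    using x y relator_props(1)[OF r] lists_car by auto
  define z' where "z' = conjug G (inv (word_prod G x)) z"
  have z': "z' \<in> carrier G" unfolding z'_def using z xc wp_car by simp
  have "par G (x @ (r @ y)) z = (par G x z \<noteq> par G (r @ y) z')"
    unfolding z'_def by (rule par_append) (use xc rc yc z in auto)
  moreover have "par G (r @ y) z' = (par G r z' \<noteq> par G y (conjug G (inv (word_prod G r)) z'))"
    by (rule par_append) (use rc yc z' in auto)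
  moreover have "conjug G (inv (word_prod G r)) z' = z'" using relator_props(2)[OF r] z' by simp
  moreover have "par G (x @ y) z = (par G x z \<noteq> par G y z')"
    unfolding z'_def by (rule par_append) (use xc yc z in auto)
  ultimately show ?thesis using relator_props(4)[OF r] by simp
qed

lemma move_inv:
  assumes m: "cox_move G S v w" and v: "v \<in> lists S"
  shows "w \<in> lists S \<and> (even (length v) = even (length w)) \<and> (\<forall>z\<in>carrier G. par G v z = par G w z)"
proof -
  obtain x y r where r: "r \<in> cox_relators G S" and
    c: "(v = x @ r @ y \<and> w = x @ y) \<or> (v = x @ y \<and> w = x @ r @ y)"
    using m unfolding cox_move_def by blast
  have rl: "r \<in> lists S" "even (length r)" using relator_props[OF r] by auto
  from c show ?thesis
  proof
    assume h: "v = x @ r @ y \<and> w = x @ y"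
    then have "x \<in> lists S" "y \<in> lists S" using v by auto
    then show ?thesis using h par_rel_mid[OF _ _ r] rl by auto
  next
    assume h: "v = x @ y \<and> w = x @ r @ y"
    then have "x \<in> lists S" "y \<in> lists S" using v by auto
    then show ?thesis using h par_rel_mid[OF _ _ r] rl by auto
  qed
qed

lemma moves_inv:
  assumes "(cox_move G S)\<^sup>*\<^sup>* v w" and "v \<in> lists S"
  shows "w \<in> lists S \<and> (even (length v) = even (length w)) \<and> (\<forall>z\<in>carrier G. par G v z = par G w z)"
  using assms
proof (induct rule: rtranclp_induct)
  case base then show ?case by simp
next
  case (step y z)
  then have "y \<in> lists S" by blast
  from move_inv[OF step(2) this] step show ?case by auto
qed

lemma one_word:
  assumes "w \<in> lists S" "word_prod G w = \<one>"
  shows "even (length w)" "\<And>z. z \<in> carrier G \<Longrightarrow> \<not> par G w z"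
proof -
  have h: "[] \<in> lists S \<and> (even (length w) = even (length ([]::'a list))) \<and> (\<forall>z\<in>carrier G. par G w z = par G [] z)"
    using moves_inv[OF pres[OF assms] assms(1)] .
  show "even (length w)" using h by simp
  show "\<not> par G w z" if "z \<in> carrier G" for z using h that by (simp add: par_def)
qed

lemma same_prod:
  assumes w1: "w1 \<in> lists S" and w2: "w2 \<in> lists S" and e: "word_prod G w1 = word_prod G w2"
  shows "even (length w1) = even (length w2)"
    "\<And>z. z \<in> carrier G \<Longrightarrow> par G w1 z = par G w2 z"
proof -
  have c1: "set w1 \<subseteq> carrier G" and c2: "set w2 \<subseteq> carrier G" using w1 w2 lists_car by auto
  have W2: "word_prod G w2 \<in> carrier G" using c2 wp_car by blast
  have r2: "rev w2 \<in> lists S" "set (rev w2) \<subseteq> carrier G" using w2 c2 by auto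
  have u1: "w1 @ rev w2 \<in> lists S" "word_prod G (w1 @ rev w2) = \<one>"
    using w1 r2 wp_append[OF c1 r2(2)] wp_rev[OF w2] e W2 by auto
  have u2: "w2 @ rev w2 \<in> lists S" "word_prod G (w2 @ rev w2) = \<one>"
    using w2 r2 wp_append[OF c2 r2(2)] wp_rev[OF w2] W2 by auto
  show "even (length w1) = even (length w2)" using one_word(1)[OF u1] by simp
  show "par G w1 z = par G w2 z" if z: "z \<in> carrier G" for z
  proof -
    have "par G (w1 @ rev w2) z = (par G w1 z \<noteq> par G (rev w2) (conjug G (inv (word_prod G w1)) z))"
      by (rule par_append[OF c1 r2(2) z])
    moreover have "par G (w2 @ rev w2) z = (par G w2 z \<noteq> par G (rev w2) (conjug G (inv (word_prod G w2)) z))"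
      by (rule par_append[OF c2 r2(2) z])
    ultimately show ?thesis using one_word(2)[OF u1 z] one_word(2)[OF u2 z] e by simp
  qed
qed


lemma gen_words: assumes I: "I \<subseteq> S" shows "generate G I = word_prod G ` lists I"
proof
  show "generate G I \<subseteq> word_prod G ` lists I"
  proof
    fix g assume "g \<in> generate G I"
    then show "g \<in> word_prod G ` lists I"
    proof (induct rule: generate.induct)
      case one
      have "word_prod G [] = \<one>" by simp
      then show ?case by (metis image_eqI lists.Nil)
    next
      case (incl h)
      then have "h \<in> carrier G" using I S_car by auto
      then have "word_prod G [h] = h" by simp
      moreover have "[h] \<in> lists I" using incl by simp
      ultimately show ?case by (metis image_eqI)
    next
      case (inv h)
      then have "h \<in> carrier G" "inv h = h" using I S_car S_inv2 by auto
      then have "word_prod G [h] = inv h" by simp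
      moreover have "[h] \<in> lists I" using inv by simp
      ultimately show ?case by (metis image_eqI)
    next
      case (eng h1 h2)
      then obtain w1 w2 where "w1 \<in> lists I" "w2 \<in> lists I" "h1 = word_prod G w1" "h2 = word_prod G w2"
        by blast
      moreover have "set w1 \<subseteq> carrier G" "set w2 \<subseteq> carrier G" using calculation I S_car by auto
      ultimately have "word_prod G (w1 @ w2) = h1 \<otimes> h2" "w1 @ w2 \<in> lists I"
        using wp_append by auto
      then show ?case by (metis image_eqI)
    qed
  qed
next
  show "word_prod G ` lists I \<subseteq> generate G I"
  proof
    fix g assume "g \<in> word_prod G ` lists I"
    then obtain w where w: "w \<in> lists I" "g = word_prod G w" by blast
    have "word_prod G w \<in> generate G I" using w(1)
    proof (induct w)
      case Nil then show ?case using generate.one by simp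
    next
      case (Cons a w)
      then show ?case using generate.eng[OF generate.incl] by simp
    qed
    then show "g \<in> generate G I" using w by simp
  qed
qed

lemma gen_sub: "I \<subseteq> S \<Longrightarrow> subgroup (generate G I) G"
  using generate_is_subgroup S_car by blast

definition len :: "'a \<Rightarrow> nat" where
  "len g = (LEAST n. \<exists>w\<in>lists S. length w = n \<and> word_prod G w = g)"

lemma len_ex: assumes g: "g \<in> carrier G"
  shows "\<exists>w\<in>lists S. length w = len g \<and> word_prod G w = g"
proof -
  have "g \<in> word_prod G ` lists S" using g gen_S gen_words[of S] by simp
  then obtain w where "w \<in> lists S" "word_prod G w = g" by blast
  then have "\<exists>n. \<exists>w\<in>lists S. length w = n \<and> word_prod G w = g" by blast
  then show ?thesis unfolding len_def by (rule LeastI_ex)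
qed

lemma len_le: "w \<in> lists S \<Longrightarrow> len (word_prod G w) \<le> length w"
  unfolding len_def by (rule Least_le) blast

lemma len_inv: assumes g: "g \<in> carrier G" shows "len (inv g) = len g"
proof -
  have a: "len (inv h) \<le> len h" if h: "h \<in> carrier G" for h
  proof -
    obtain w where w: "w \<in> lists S" "length w = len h" "word_prod G w = h" using len_ex[OF h] by blast
    have "rev w \<in> lists S" using w by auto
    moreover have "word_prod G (rev w) = inv h" using wp_rev[OF w(1)] w by simp
    ultimately show ?thesis using len_le[of "rev w"] w by simp
  qed
  show ?thesis using a[OF g] a[of "inv g"] g by simp
qed

lemma reduced_crit:
  assumes w: "w \<in> lists S" and d: "distinct (refl_list G w)"
  shows "length w = len (word_prod G w)"
proof -
  have wc: "set w \<subseteq> carrier G" using w lists_car by blast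
  obtain w' where w': "w' \<in> lists S" "length w' = len (word_prod G w)" "word_prod G w' = word_prod G w"
    using len_ex[OF wp_car[OF wc]] by blast
  have P: "{z \<in> carrier G. par G w z} = set (refl_list G w)"
    using Tl_car[OF wc] d by (auto simp: par_def count_distinct)
  have P': "{z \<in> carrier G. par G w' z} \<subseteq> set (refl_list G w')"
  proof
    fix z assume "z \<in> {z \<in> carrier G. par G w' z}"
    then have "odd (count_list (refl_list G w') z)" by (simp add: par_def)
    then have "count_list (refl_list G w') z \<noteq> 0" by (metis even_zero)
    then show "z \<in> set (refl_list G w')" using count_list_0_iff by metis
  qed
  have eq: "{z \<in> carrier G. par G w z} = {z \<in> carrier G. par G w' z}"
    using same_prod(2)[OF w w'(1) w'(3)[symmetric]] by auto
  have "length w = card (set (refl_list G w))" using distinct_card[OF d] by simp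
  also have "\<dots> \<le> card (set (refl_list G w'))" using P P' eq by (simp add: card_mono)
  also have "\<dots> \<le> length w'" using card_length[of "refl_list G w'"] by simp
  finally have "length w \<le> len (word_prod G w)" using w' by simp
  moreover have "len (word_prod G w) \<le> length w" by (rule len_le[OF w])
  ultimately show ?thesis by simp
qed

lemma Tl_nth: assumes wc: "set w \<subseteq> carrier G" and k: "k < length w"
  shows "refl_list G w ! k = conjug G (word_prod G (take k w)) (w ! k)"
proof -
  have e: "w = take k w @ (w ! k # drop (Suc k) w)" using k by (simp add: Cons_nth_drop_Suc)
  have c1: "set (take k w) \<subseteq> carrier G" using wc by (meson order_trans set_take_subset)
  have c2: "set (w ! k # drop (Suc k) w) \<subseteq> carrier G" using wc k
    by (metis e set_append le_sup_iff)
  have "refl_list G w = refl_list G (take k w) @ map (conjug G (word_prod G (take k w))) (refl_list G (w ! k # drop (Suc k) w))"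
    using Tl_append[OF c1 c2] e by metis
  moreover have "length (refl_list G (take k w)) = k" using k by simp
  ultimately show ?thesis by (simp add: nth_append)
qed

lemma del_wp: assumes w: "w \<in> lists S" and k: "k < length w"
  shows "word_prod G (del k w) = (refl_list G w ! k) \<otimes> word_prod G w"
proof -
  have wc: "set w \<subseteq> carrier G" using w lists_car by blast
  have e: "w = take k w @ (w ! k # drop (Suc k) w)" using k by (simp add: Cons_nth_drop_Suc)
  have c1: "set (take k w) \<subseteq> carrier G" using wc by (meson order_trans set_take_subset)
  have c3: "set (drop (Suc k) w) \<subseteq> carrier G" using wc by (meson order_trans set_drop_subset)
  have a: "w ! k \<in> S" using w k by (simp add: in_listsD)
  then have ac: "w ! k \<in> carrier G" using S_car by blast
  define P where "P = word_prod G (take k w)"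
  define R where "R = word_prod G (drop (Suc k) w)"
  have Pc: "P \<in> carrier G" and Rc: "R \<in> carrier G" unfolding P_def R_def using wp_car c1 c3 by auto
  have "word_prod G w = P \<otimes> (w ! k \<otimes> R)"
    unfolding P_def R_def using wp_append[OF c1, of "w ! k # drop (Suc k) w"] e ac c3
    by (metis insert_subset list.simps(15) wp_Cons)
  moreover have "word_prod G (del k w) = P \<otimes> R"
    unfolding P_def R_def del_def by (rule wp_append[OF c1 c3])
  moreover have "refl_list G w ! k = conjug G P (w ! k)" unfolding P_def by (rule Tl_nth[OF wc k])
  moreover have "conjug G P (w ! k) \<otimes> (P \<otimes> (w ! k \<otimes> R)) = P \<otimes> R"
  proof -
    have "conjug G P (w ! k) \<otimes> (P \<otimes> (w ! k \<otimes> R)) = P \<otimes> ((w ! k \<otimes> w ! k) \<otimes> R)"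
      using Pc Rc ac by (simp add: conjug_def m_assoc)
    then show ?thesis using S_inv[OF a] Rc by simp
  qed
  ultimately show ?thesis by simp
qed

lemma del2_wp: assumes w: "w \<in> lists S" and ij: "i < j" "j < length w"
  and eq: "refl_list G w ! i = refl_list G w ! j"
  shows "word_prod G (del i (del j w)) = word_prod G w"
proof -
  have wc: "set w \<subseteq> carrier G" using w lists_car by blast
  have dw: "del j w \<in> lists S" using w set_del[of j w] by blast
  have dwc: "set (del j w) \<subseteq> carrier G" using dw lists_car by blast
  have il: "i < length (del j w)" using ij length_del[of j w] by simp
  have t1: "take i (del j w) = take i w" using ij by (simp add: del_def)
  have t2: "del j w ! i = w ! i" using ij by (simp add: del_def nth_append)
  have Ti: "refl_list G (del j w) ! i = refl_list G w ! i"
    using Tl_nth[OF dwc il] Tl_nth[OF wc] ij t1 t2 by simp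
  define t where "t = refl_list G w ! i"
  have a: "w ! i \<in> S" using w ij by (simp add: in_listsD)
  have tt: "t \<otimes> t = \<one>"
  proof -
    have Pc: "word_prod G (take i w) \<in> carrier G" using wc by (meson order_trans set_take_subset wp_car)
    have ac: "w ! i \<in> carrier G" using a S_car by blast
    have "t = conjug G (word_prod G (take i w)) (w ! i)" unfolding t_def using Tl_nth[OF wc] ij by simp
    then have "t \<otimes> t = conjug G (word_prod G (take i w)) (w ! i \<otimes> w ! i)" using conj_mult Pc ac by simp
    then show ?thesis using S_inv[OF a] Pc by (simp add: conjug_def)
  qed
  have tc: "t \<in> carrier G" unfolding t_def using Tl_car[OF wc] ij by (simp add: subsetD)
  have "word_prod G (del i (del j w)) = t \<otimes> (t \<otimes> word_prod G w)"
    using del_wp[OF dw il] del_wp[OF w ij(2)] Ti eq t_def by simp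
  also have "\<dots> = word_prod G w" using tt tc wp_car[OF wc] by (simp add: m_assoc[symmetric])
  finally show ?thesis .
qed


lemma conj_sub_img: assumes H: "subgroup H G" and g: "g \<in> H" shows "conjug G g ` H = H"
proof
  have gc: "g \<in> carrier G" using H g subgroup.subset by blast
  show "conjug G g ` H \<subseteq> H"
    using H g by (auto simp: conjug_def subgroup.m_closed subgroup.m_inv_closed)
  show "H \<subseteq> conjug G g ` H"
  proof
    fix x assume x: "x \<in> H"
    then have xc: "x \<in> carrier G" using H subgroup.subset by blast
    have "conjug G (inv g) x \<in> H"
      using H g x by (auto simp: conjug_def subgroup.m_closed subgroup.m_inv_closed)
    moreover have "x = conjug G g (conjug G (inv g) x)" using conj_inv_cancel gc xc by simp
    ultimately show "x \<in> conjug G g ` H" by blast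
  qed
qed

lemma gen_car: "I \<subseteq> S \<Longrightarrow> generate G I \<subseteq> carrier G"
  using gen_sub subgroup.subset by blast

lemma keyK:
  assumes I: "I \<subseteq> S" and J: "J \<subseteq> S" and v: "v \<in> carrier G"
    and cj: "conjug G v ` generate G J = generate G I"
    and mn: "\<forall>a\<in>generate G I. \<forall>b\<in>generate G J. len v \<le> len (a \<otimes> v \<otimes> b)"
    and s: "s \<in> J"
  shows "conjug G v s \<in> I"
proof -
  have sS: "s \<in> S" using s J by blast
  have sc: "s \<in> carrier G" using sS S_car by blast
  have sJ: "s \<in> generate G J" using s by (rule generate.incl)
  have vs: "v \<otimes> s \<in> carrier G" using v sc by simp
  have l1: "len v \<le> len (v \<otimes> s)"
  proof -
    have "len v \<le> len (\<one> \<otimes> v \<otimes> s)" using bspec[OF bspec[OF mn generate.one] sJ] .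
    moreover have "\<one> \<otimes> v \<otimes> s = v \<otimes> s" using v sc by simp
    ultimately show ?thesis by simp
  qed
  obtain V where V: "V \<in> lists S" "length V = len v" "word_prod G V = v" using len_ex[OF v] by blast
  have Vc: "set V \<subseteq> carrier G" using V(1) lists_car by blast
  have VS: "V @ [s] \<in> lists S" "word_prod G (V @ [s]) = v \<otimes> s"
    using V sS wp_append[OF Vc, of "[s]"] sc by auto
  have l2: "len (v \<otimes> s) \<le> len v + 1" using len_le[OF VS(1)] VS(2) V(2) by simp
  obtain U where U: "U \<in> lists S" "length U = len (v \<otimes> s)" "word_prod G U = v \<otimes> s"
    using len_ex[OF vs] by blast
  have l3: "len (v \<otimes> s) \<noteq> len v"
  proof
    assume "len (v \<otimes> s) = len v"
    moreover have "even (length U) = even (length (V @ [s]))" using same_prod(1)[OF U(1) VS(1)] U VS by simp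
    ultimately show False using U(2) V(2) by simp
  qed
  have lvs: "len (v \<otimes> s) = len v + 1" using l1 l2 l3 by simp
  define t where "t = conjug G v s"
  have tI: "t \<in> generate G I" unfolding t_def using cj sJ by blast
  have tc: "t \<in> carrier G" unfolding t_def using v sc by simp
  have tv: "t \<otimes> v = v \<otimes> s" unfolding t_def conjug_def using v sc by (simp add: m_assoc)
  have "t \<in> word_prod G ` lists I" using tI gen_words[OF I] by simp
  then obtain Xw0 where Xw0: "Xw0 \<in> lists I" "word_prod G Xw0 = t" by (metis imageE)
  have "\<exists>Xw. (Xw \<in> lists I \<and> word_prod G Xw = t) \<and>
     (\<forall>Y. Y \<in> lists I \<and> word_prod G Y = t \<longrightarrow> length Xw \<le> length Y)"
    by (rule ex_has_least_nat[where P="\<lambda>Y. Y \<in> lists I \<and> word_prod G Y = t" and m=length, OF conjI[OF Xw0]])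
  then obtain Xw where Xw: "Xw \<in> lists I \<and> word_prod G Xw = t"
    and Xmin: "\<forall>Y. Y \<in> lists I \<and> word_prod G Y = t \<longrightarrow> length Xw \<le> length Y"
    by blast
  have "lists I \<subseteq> lists S" using I by (rule lists_mono)
  then have XS: "Xw \<in> lists S" using Xw by blast
  have Xc: "set Xw \<subseteq> carrier G" using lists_car[OF XS] .
  define w where "w = Xw @ V"
  have wS: "w \<in> lists S" unfolding w_def using XS V(1) by simp
  have wp: "word_prod G w = t \<otimes> v" unfolding w_def using wp_append[OF Xc Vc] Xw V(3) by simp
  have dist: "distinct (refl_list G w)"
  proof (rule ccontr)
    assume "\<not> distinct (refl_list G w)"
    then obtain i j where ij0: "i < j" "j < length (refl_list G w)" "refl_list G w ! i = refl_list G w ! j"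
      using not_distinct_nth by blast
    then have ij: "i < j" "j < length w" "refl_list G w ! i = refl_list G w ! j" by auto
    have D: "word_prod G (del i (del j w)) = t \<otimes> v" using del2_wp[OF wS ij] wp by simp
    show False
    proof (cases "j < length Xw")
      case True
      define Xw' where "Xw' = del i (del j Xw)"
      have "del j w = del j Xw @ V" unfolding w_def using True by (rule del_append1)
      moreover have "i < length (del j Xw)" using True ij length_del[of j Xw] by simp
      ultimately have e: "del i (del j w) = Xw' @ V" unfolding Xw'_def using del_append1 by metis
      have Xw'I: "Xw' \<in> lists I" unfolding Xw'_def using Xw by (simp add: lists_del)
      have Xw'c: "set Xw' \<subseteq> carrier G" using Xw'I I S_car by auto
      have "word_prod G Xw' \<otimes> v = t \<otimes> v" using D e wp_append[OF Xw'c Vc] V by simp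
      then have "word_prod G Xw' = t" using wp_car[OF Xw'c] tc v by simp
      then have "length Xw \<le> length Xw'" using Xmin Xw'I by blast
      moreover have "length Xw' = length Xw - 2"
        unfolding Xw'_def using True ij length_del[of j Xw] length_del[of i "del j Xw"] by simp
      ultimately show False using True by simp
    next
      case False
      then have jX: "length Xw \<le> j" by simp
      have dj: "del j w = Xw @ del (j - length Xw) V" unfolding w_def using jX by (rule del_append2)
      have jV: "j - length Xw < length V" using ij jX unfolding w_def by simp
      show False
      proof (cases "length Xw \<le> i")
        case True
        define V' where "V' = del (i - length Xw) (del (j - length Xw) V)"
        have e: "del i (del j w) = Xw @ V'" unfolding V'_def dj using True by (rule del_append2)
        have V'S: "V' \<in> lists S" unfolding V'_def using V(1) by (simp add: lists_del)
        have V'c: "set V' \<subseteq> carrier G" using V'S lists_car by blast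
        have "t \<otimes> word_prod G V' = t \<otimes> v" using D e wp_append[OF Xc V'c] Xw by simp
        then have "inv t \<otimes> (t \<otimes> word_prod G V') = inv t \<otimes> (t \<otimes> v)" by simp
        then have "word_prod G V' = v" using tc v wp_car[OF V'c] by simp
        then have "len v \<le> length V'" using len_le[OF V'S] by simp
        moreover have "length V' = length V - 2"
          unfolding V'_def using True ij jV length_del[of "j - length Xw" V]
            length_del[of "i - length Xw" "del (j - length Xw) V"] by simp
        ultimately show False using V(2) jV by simp
      next
        case False
        then have iX: "i < length Xw" by simp
        define Xw1 where "Xw1 = del i Xw"
        define V1 where "V1 = del (j - length Xw) V"
        have e: "del i (del j w) = Xw1 @ V1" unfolding Xw1_def V1_def dj using iX by (rule del_append1)
        have Xw1I: "Xw1 \<in> lists I" unfolding Xw1_def using Xw by (simp add: lists_del)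
        have Xw1c: "set Xw1 \<subseteq> carrier G" using Xw1I I S_car by auto
        have V1S: "V1 \<in> lists S" unfolding V1_def using V(1) by (simp add: lists_del)
        have V1c: "set V1 \<subseteq> carrier G" using V1S lists_car by blast
        have P1: "word_prod G Xw1 \<in> generate G I" using Xw1I gen_words[OF I] by blast
        have P1c: "word_prod G Xw1 \<in> carrier G" using wp_car[OF Xw1c] .
        have Q1c: "word_prod G V1 \<in> carrier G" using wp_car[OF V1c] .
        have h: "word_prod G Xw1 \<otimes> word_prod G V1 = t \<otimes> v" using D e wp_append[OF Xw1c V1c] by simp
        define a where "a = inv (word_prod G Xw1) \<otimes> t"
        have aI: "a \<in> generate G I" unfolding a_def
          using P1 tI gen_sub[OF I] by (simp add: subgroup.m_closed subgroup.m_inv_closed)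
        have "inv (word_prod G Xw1) \<otimes> (word_prod G Xw1 \<otimes> word_prod G V1) = inv (word_prod G Xw1) \<otimes> (t \<otimes> v)"
          using h by simp
        then have "word_prod G V1 = a \<otimes> v \<otimes> \<one>" unfolding a_def using P1c Q1c tc v by (simp add: m_assoc)
        then have "len v \<le> len (word_prod G V1)" using bspec[OF bspec[OF mn aI] generate.one] by simp
        also have "\<dots> \<le> length V1" by (rule len_le[OF V1S])
        also have "length V1 = length V - 1" unfolding V1_def using jV length_del by blast
        finally show False using V(2) jV by simp
      qed
    qed
  qed
  have "length w = len (t \<otimes> v)" using reduced_crit[OF wS dist] wp by simp
  then have "length Xw = 1" unfolding w_def using tv lvs V(2) by simp
  then obtain x where x: "Xw = [x]" by (metis One_nat_def length_0_conv length_Suc_conv)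
  then have "x \<in> I" using Xw by simp
  moreover have "t = x" using Xw x I S_car by auto
  ultimately show ?thesis unfolding t_def by simp
qed


lemma CL:
  assumes I: "I \<subseteq> S" and J: "J \<subseteq> S" and v: "v \<in> carrier G"
    and cj: "conjug G v ` generate G J = generate G I"
  shows "\<exists>c\<in>generate G I. conjug G v ` J = conjug G c ` I"
proof -
  have gIs: "subgroup (generate G I) G" and gJs: "subgroup (generate G J) G" using gen_sub I J by auto
  have gIc: "generate G I \<subseteq> carrier G" and gJc: "generate G J \<subseteq> carrier G" using gen_car I J by auto
  have "\<exists>p. (fst p \<in> generate G I \<and> snd p \<in> generate G J) \<and>
     (\<forall>q. fst q \<in> generate G I \<and> snd q \<in> generate G J \<longrightarrow> len (fst p \<otimes> v \<otimes> snd p) \<le> len (fst q \<otimes> v \<otimes> snd q))"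
    by (rule ex_has_least_nat[where P="\<lambda>p. fst p \<in> generate G I \<and> snd p \<in> generate G J"
         and m="\<lambda>p. len (fst p \<otimes> v \<otimes> snd p)" and k="(\<one>, \<one>)"]) (simp add: generate.one)
  then obtain a0 b0 where ab: "a0 \<in> generate G I" "b0 \<in> generate G J"
    and amin: "\<forall>q. fst q \<in> generate G I \<and> snd q \<in> generate G J \<longrightarrow> len (a0 \<otimes> v \<otimes> b0) \<le> len (fst q \<otimes> v \<otimes> snd q)"
    by force
  have a0c: "a0 \<in> carrier G" and b0c: "b0 \<in> carrier G" using ab gIc gJc by auto
  define v' where "v' = a0 \<otimes> v \<otimes> b0"
  have v'c: "v' \<in> carrier G" unfolding v'_def using a0c b0c v by simp
  have mn: "\<forall>a\<in>generate G I. \<forall>b\<in>generate G J. len v' \<le> len (a \<otimes> v' \<otimes> b)"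
  proof (intro ballI)
    fix a b assume a: "a \<in> generate G I" and b: "b \<in> generate G J"
    have ac: "a \<in> carrier G" and bc: "b \<in> carrier G" using a b gIc gJc by auto
    have "a \<otimes> a0 \<in> generate G I" using a ab(1) gIs by (simp add: subgroup.m_closed)
    moreover have "b0 \<otimes> b \<in> generate G J" using b ab(2) gJs by (simp add: subgroup.m_closed)
    ultimately have "len v' \<le> len ((a \<otimes> a0) \<otimes> v \<otimes> (b0 \<otimes> b))"
      using amin[rule_format, of "(a \<otimes> a0, b0 \<otimes> b)"] unfolding v'_def by simp
    also have "(a \<otimes> a0) \<otimes> v \<otimes> (b0 \<otimes> b) = a \<otimes> v' \<otimes> b"
      unfolding v'_def using ac bc a0c b0c v by (simp add: m_assoc)
    finally show "len v' \<le> len (a \<otimes> v' \<otimes> b)" .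
  qed
  have cj': "conjug G v' ` generate G J = generate G I"
  proof -
    have "conjug G v' x = conjug G a0 (conjug G v (conjug G b0 x))" if "x \<in> carrier G" for x
      using that a0c b0c v unfolding v'_def by (simp add: conj_comp m_assoc)
    then have "conjug G v' ` generate G J = conjug G a0 ` (conjug G v ` (conjug G b0 ` generate G J))"
      using gJc by (auto simp: image_image subset_iff intro!: image_cong)
    also have "\<dots> = generate G I" using conj_sub_img[OF gJs ab(2)] cj conj_sub_img[OF gIs ab(1)] by simp
    finally show ?thesis .
  qed
  have cj'': "conjug G (inv v') ` generate G I = generate G J"
  proof -
    have "conjug G (inv v') ` generate G I = conjug G (inv v') ` conjug G v' ` generate G J" using cj' by simp
    also have "\<dots> = generate G J" using gJc v'c conj_inv_cancel2
      by (auto simp: image_image subset_iff intro!: image_cong)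
    finally show ?thesis .
  qed
  have mn': "\<forall>b\<in>generate G J. \<forall>a\<in>generate G I. len (inv v') \<le> len (b \<otimes> inv v' \<otimes> a)"
  proof (intro ballI)
    fix a b assume b: "b \<in> generate G J" and a: "a \<in> generate G I"
    have ac: "a \<in> carrier G" and bc: "b \<in> carrier G" using a b gIc gJc by auto
    have "inv a \<in> generate G I" using a gIs by (simp add: subgroup.m_inv_closed)
    moreover have "inv b \<in> generate G J" using b gJs by (simp add: subgroup.m_inv_closed)
    ultimately have "len v' \<le> len (inv a \<otimes> v' \<otimes> inv b)" using mn by blast
    also have "\<dots> = len (inv (inv a \<otimes> v' \<otimes> inv b))" using ac bc v'c len_inv by simp
    also have "inv (inv a \<otimes> v' \<otimes> inv b) = b \<otimes> inv v' \<otimes> a"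
      using ac bc v'c by (simp add: inv_mult_group m_assoc)
    finally show "len (inv v') \<le> len (b \<otimes> inv v' \<otimes> a)" using len_inv[OF v'c] by simp
  qed
  have K1: "\<forall>s\<in>J. conjug G v' s \<in> I" using keyK[OF I J v'c cj' mn] by blast
  have K2: "\<forall>s\<in>I. conjug G (inv v') s \<in> J" using keyK[OF J I _ cj'' mn'] v'c by blast
  have img: "conjug G v' ` J = I"
  proof
    show "conjug G v' ` J \<subseteq> I" using K1 by blast
    show "I \<subseteq> conjug G v' ` J"
    proof
      fix s assume s: "s \<in> I"
      then have "s \<in> carrier G" using I S_car by blast
      then have "s = conjug G v' (conjug G (inv v') s)" using conj_inv_cancel v'c by simp
      then show "s \<in> conjug G v' ` J" using K2 s by blast
    qed
  qed
  define c where "c = v \<otimes> inv v'"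
  have cc: "c \<in> carrier G" unfolding c_def using v v'c by simp
  have cI: "c \<in> generate G I"
  proof -
    have e1: "v' \<otimes> inv b0 = a0 \<otimes> v" unfolding v'_def using a0c b0c v by (simp add: m_assoc)
    have "conjug G v' (inv b0) = a0 \<otimes> c"
      unfolding conjug_def c_def using e1 a0c b0c v v'c by (simp add: m_assoc)
    then have "c = inv a0 \<otimes> conjug G v' (inv b0)" using a0c cc by simp
    moreover have "conjug G v' (inv b0) \<in> generate G I"
      using cj' ab(2) gJs by (metis image_eqI subgroup.m_inv_closed)
    moreover have "inv a0 \<in> generate G I" using ab(1) gIs by (simp add: subgroup.m_inv_closed)
    ultimately show ?thesis using gIs by (simp add: subgroup.m_closed)
  qed
  have cv: "c \<otimes> v' = v" unfolding c_def using v v'c by (simp add: m_assoc)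
  have "conjug G v ` J = conjug G c ` (conjug G v' ` J)"
  proof -
    have "conjug G v x = conjug G c (conjug G v' x)" if "x \<in> J" for x
      using that J S_car cc v'c cv conj_comp by auto
    then show ?thesis by (auto simp: image_image intro!: image_cong)
  qed
  then show ?thesis using cI img by blast
qed


lemma spgrp_carrier[simp]: "carrier (spgrp G A) = generate G A" by (simp add: spgrp_def)
lemma spgrp_mult[simp]: "monoid.mult (spgrp G A) = monoid.mult G" by (simp add: spgrp_def)

lemma conj_bij: assumes u: "u \<in> carrier G" and H: "H \<subseteq> carrier G"
  shows "bij_betw (conjug G u) H (conjug G u ` H)"
proof (rule inj_on_imp_bij_betw, rule inj_onI)
  fix x y assume "x \<in> H" "y \<in> H" "conjug G u x = conjug G u y"
  then show "x = y" using H u conj_inv_cancel2 by (metis subsetD)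
qed

lemma L1:
  assumes Ac: "A \<subseteq> carrier G" and A'c: "A' \<subseteq> carrier G" and u: "u \<in> carrier G"
    and gu: "generate G A = conjug G u ` generate G A'"
    and al: "pair_iso G A A' \<alpha>"
  shows "inner_by_graph G A (\<lambda>x. conjug G u (\<alpha> x)) \<longleftrightarrow> (\<exists>g\<in>generate G A. conjug G u ` A' = conjug G g ` A)"
proof -
  have gAs: "subgroup (generate G A) G" using generate_is_subgroup[OF Ac] .
  have gA's: "subgroup (generate G A') G" using generate_is_subgroup[OF A'c] .
  have gAc: "generate G A \<subseteq> carrier G" using gAs subgroup.subset by blast
  have gA'c: "generate G A' \<subseteq> carrier G" using gA's subgroup.subset by blast
  have AgA: "A \<subseteq> generate G A" by (rule subsetI, erule generate.incl)
  have al2: "\<alpha> \<in> iso (spgrp G A) (spgrp G A')" and alA: "\<alpha> ` A = A'"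
    using al unfolding pair_iso_def by blast+
  have alh: "\<alpha> \<in> hom (spgrp G A) (spgrp G A')" and albij0: "bij_betw \<alpha> (carrier (spgrp G A)) (carrier (spgrp G A'))"
    using al2 unfolding iso_def by blast+
  have albij: "bij_betw \<alpha> (generate G A) (generate G A')" using albij0 by simp
  have alm: "\<alpha> (x \<otimes> y) = \<alpha> x \<otimes> \<alpha> y" if "x \<in> generate G A" "y \<in> generate G A" for x y
  proof -
    have "\<forall>x\<in>carrier (spgrp G A). \<forall>y\<in>carrier (spgrp G A). \<alpha> (x \<otimes>\<^bsub>spgrp G A\<^esub> y) = \<alpha> x \<otimes>\<^bsub>spgrp G A'\<^esub> \<alpha> y"
      using alh unfolding hom_def by blast
    then show ?thesis using that by simp
  qed
  have alc: "\<alpha> x \<in> generate G A'" if "x \<in> generate G A" for x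
    using albij that bij_betwE by blast
  show ?thesis
  proof
    assume "inner_by_graph G A (\<lambda>x. conjug G u (\<alpha> x))"
    then obtain g \<sigma> where g: "g \<in> generate G A" and sg: "pair_iso G A A \<sigma>"
      and eq: "\<forall>x\<in>generate G A. conjug G u (\<alpha> x) = conjug G g (\<sigma> x)"
      unfolding inner_by_graph_def by blast
    have sA: "\<sigma> ` A = A" using sg unfolding pair_iso_def by blast
    have "conjug G u ` A' = (\<lambda>x. conjug G u (\<alpha> x)) ` A" using alA by auto
    also have "\<dots> = (\<lambda>x. conjug G g (\<sigma> x)) ` A" using eq AgA by (auto intro!: image_cong)
    also have "\<dots> = conjug G g ` (\<sigma> ` A)" by (simp add: image_image)
    also have "\<dots> = conjug G g ` A" using sA by simp
    finally show "\<exists>g\<in>generate G A. conjug G u ` A' = conjug G g ` A" using g by blast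
  next
    assume "\<exists>g\<in>generate G A. conjug G u ` A' = conjug G g ` A"
    then obtain g where g: "g \<in> generate G A" and eqA: "conjug G u ` A' = conjug G g ` A" by blast
    have gc: "g \<in> carrier G" using g gAc by blast
    have ig: "inv g \<in> generate G A" using g gAs by (simp add: subgroup.m_inv_closed)
    define \<sigma> where "\<sigma> = (\<lambda>x. conjug G (inv g) (conjug G u (\<alpha> x)))"
    have b1: "bij_betw (conjug G u) (generate G A') (generate G A)"
      using conj_bij[OF u gA'c] gu by simp
    have b2: "bij_betw (conjug G (inv g)) (generate G A) (generate G A)"
      using conj_bij[OF inv_closed[OF gc] gAc] conj_sub_img[OF gAs ig] by simp
    have sbij: "bij_betw \<sigma> (generate G A) (generate G A)"
    proof -
      have "bij_betw (conjug G (inv g) \<circ> (conjug G u \<circ> \<alpha>)) (generate G A) (generate G A)"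
        by (rule bij_betw_trans[OF bij_betw_trans[OF albij b1] b2])
      then show ?thesis unfolding \<sigma>_def by (simp add: comp_def)
    qed
    have smul: "\<sigma> (x \<otimes> y) = \<sigma> x \<otimes> \<sigma> y" if x: "x \<in> generate G A" and y: "y \<in> generate G A" for x y
    proof -
      have "\<alpha> x \<in> carrier G" "\<alpha> y \<in> carrier G" using alc x y gA'c by auto
      then show ?thesis unfolding \<sigma>_def using alm[OF x y] u gc by (simp add: conj_mult)
    qed
    have sh: "\<sigma> \<in> hom (spgrp G A) (spgrp G A)"
    proof -
      have "\<sigma> \<in> carrier (spgrp G A) \<rightarrow> carrier (spgrp G A)"
        using bij_betwE[OF sbij] by (simp add: Pi_iff)
      moreover have "\<forall>x\<in>carrier (spgrp G A). \<forall>y\<in>carrier (spgrp G A). \<sigma> (x \<otimes>\<^bsub>spgrp G A\<^esub> y) = \<sigma> x \<otimes>\<^bsub>spgrp G A\<^esub> \<sigma> y"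
        using smul by simp
      ultimately show ?thesis unfolding hom_def by blast
    qed
    have sA: "\<sigma> ` A = A"
    proof -
      have "\<sigma> ` A = conjug G (inv g) ` (conjug G u ` (\<alpha> ` A))" unfolding \<sigma>_def by (simp add: image_image)
      also have "\<dots> = conjug G (inv g) ` (conjug G g ` A)" using alA eqA by simp
      also have "\<dots> = A" using Ac gc conj_inv_cancel2 by (auto simp: image_image subset_iff intro!: image_cong)
      finally show ?thesis .
    qed
    have "\<sigma> \<in> iso (spgrp G A) (spgrp G A)" unfolding iso_def using sh sbij by simp
    then have psi: "pair_iso G A A \<sigma>" unfolding pair_iso_def using sA by blast
    have "\<forall>x\<in>generate G A. conjug G u (\<alpha> x) = conjug G g (\<sigma> x)"
    proof
      fix x assume x: "x \<in> generate G A"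
      have "conjug G u (\<alpha> x) \<in> carrier G" using alc[OF x] gA'c u by auto
      then show "conjug G u (\<alpha> x) = conjug G g (\<sigma> x)" unfolding \<sigma>_def using conj_inv_cancel gc by simp
    qed
    then show "inner_by_graph G A (\<lambda>x. conjug G u (\<alpha> x))"
      unfolding inner_by_graph_def using g psi by blast
  qed
qed

lemma dir:
  assumes Ac: "A \<subseteq> carrier G" and A': "A' \<subseteq> S" and B: "B \<subseteq> S"
    and u: "u \<in> carrier G" and ub: "ub \<in> carrier G"
    and gu: "generate G A = conjug G u ` generate G A'"
    and gub: "generate G A = conjug G ub ` generate G B"
    and g: "g \<in> generate G A" and eq: "conjug G u ` A' = conjug G g ` A"
  shows "\<exists>g'\<in>generate G A. conjug G ub ` B = conjug G g' ` A"
proof -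
  have gAs: "subgroup (generate G A) G" using generate_is_subgroup[OF Ac] .
  have gAc: "generate G A \<subseteq> carrier G" using gAs subgroup.subset by blast
  have gA'c: "generate G A' \<subseteq> carrier G" using gen_car[OF A'] .
  have gBc: "generate G B \<subseteq> carrier G" using gen_car[OF B] .
  have gc: "g \<in> carrier G" using g gAc by blast
  define v where "v = inv u \<otimes> ub"
  have vc: "v \<in> carrier G" unfolding v_def using u ub by simp
  have uv: "u \<otimes> v = ub" unfolding v_def using u ub by (simp add: m_assoc[symmetric])
  have cv: "conjug G v x = conjug G (inv u) (conjug G ub x)" if "x \<in> carrier G" for x
    unfolding v_def using that u ub by (simp add: conj_comp)
  have "conjug G v ` generate G B = conjug G (inv u) ` (conjug G ub ` generate G B)"
    using cv gBc by (auto simp: image_image subset_iff intro!: image_cong)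
  also have "\<dots> = conjug G (inv u) ` (conjug G u ` generate G A')" using gub gu by simp
  also have "\<dots> = generate G A'" using gA'c u conj_inv_cancel2 by (auto simp: image_image subset_iff intro!: image_cong)
  finally have cj: "conjug G v ` generate G B = generate G A'" .
  obtain c where c: "c \<in> generate G A'" and ceq: "conjug G v ` B = conjug G c ` A'"
    using CL[OF A' B vc cj] by blast
  have cc: "c \<in> carrier G" using c gA'c by blast
  define d where "d = conjug G u c"
  have dA: "d \<in> generate G A" unfolding d_def using gu c by blast
  have dc: "d \<in> carrier G" using dA gAc by blast
  have Bc: "B \<subseteq> carrier G" using B S_car by blast
  have A'c: "A' \<subseteq> carrier G" using A' S_car by blast
  have "conjug G ub ` B = conjug G u ` (conjug G v ` B)"
  proof -
    have "conjug G ub x = conjug G u (conjug G v x)" if "x \<in> B" for x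
      using that Bc u vc uv conj_comp by auto
    then show ?thesis by (auto simp: image_image intro!: image_cong)
  qed
  also have "\<dots> = conjug G u ` (conjug G c ` A')" using ceq by simp
  also have "\<dots> = conjug G d ` (conjug G u ` A')"
  proof -
    have "conjug G u (conjug G c x) = conjug G d (conjug G u x)" if "x \<in> A'" for x
    proof -
      have xc: "x \<in> carrier G" using that A'c by blast
      have "conjug G d (conjug G u x) = conjug G (d \<otimes> u) x" using dc u xc conj_comp by simp
      also have "d \<otimes> u = u \<otimes> c" unfolding d_def conjug_def using u cc by (simp add: m_assoc)
      finally show ?thesis using u cc xc conj_comp by simp
    qed
    then show ?thesis by (auto simp: image_image intro!: image_cong)
  qed
  also have "\<dots> = conjug G d ` (conjug G g ` A)" using eq by simp
  also have "\<dots> = conjug G (d \<otimes> g) ` A"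
    using Ac dc gc conj_comp by (auto simp: image_image subset_iff intro!: image_cong)
  finally show ?thesis using dA g gAs by (meson subgroup.m_closed)
qed

end

theorem lemma7p7:
  fixes G :: "('a, 'b) monoid_scheme"
  assumes "coxeter_system G S" and "finite S"
    and "coxeter_system G S'" and "S' \<subseteq> conj_closure G S"
    and "simplex G S A" and "irreducible_set G A"
    and "simplex G S' A'" and "irreducible_set G A'"
    and "simplex G S' Ab'" and "irreducible_set G Ab'"
    and "u \<in> carrier G" and "ub \<in> carrier G"
    and "generate G A = conjug G u ` generate G A'"
    and "generate G A = conjug G ub ` generate G Ab'"
    and "pair_iso G A A' \<alpha>" and "pair_iso G A Ab' \<alpha>b"
  shows "inner_by_graph G A (\<lambda>x. conjug G u (\<alpha> x)) \<longleftrightarrow>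
         inner_by_graph G A (\<lambda>x. conjug G ub (\<alpha>b x))"
proof -
  interpret C: coxs G S' by (rule coxs.intro, rule assms(3))
  have Sc: "S \<subseteq> carrier G" by (rule coxs.S_car[OF coxs.intro[OF assms(1)]])
  have Ac: "A \<subseteq> carrier G" using assms(5) Sc unfolding simplex_def by blast
  have A': "A' \<subseteq> S'" using assms(7) unfolding simplex_def by blast
  have B: "Ab' \<subseteq> S'" using assms(9) unfolding simplex_def by blast
  have A'c: "A' \<subseteq> carrier G" using A' C.S_car by blast
  have Bc: "Ab' \<subseteq> carrier G" using B C.S_car by blast
  have e1: "inner_by_graph G A (\<lambda>x. conjug G u (\<alpha> x)) \<longleftrightarrow> (\<exists>g\<in>generate G A. conjug G u ` A' = conjug G g ` A)"
    by (rule C.L1[OF Ac A'c assms(11) assms(13) assms(15)])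
  have e2: "inner_by_graph G A (\<lambda>x. conjug G ub (\<alpha>b x)) \<longleftrightarrow> (\<exists>g\<in>generate G A. conjug G ub ` Ab' = conjug G g ` A)"
    by (rule C.L1[OF Ac Bc assms(12) assms(14) assms(16)])
  have d1: "(\<exists>g\<in>generate G A. conjug G u ` A' = conjug G g ` A) \<Longrightarrow> (\<exists>g\<in>generate G A. conjug G ub ` Ab' = conjug G g ` A)"
    using C.dir[OF Ac A' B assms(11) assms(12) assms(13) assms(14)] by blast
  have d2: "(\<exists>g\<in>generate G A. conjug G ub ` Ab' = conjug G g ` A) \<Longrightarrow> (\<exists>g\<in>generate G A. conjug G u ` A' = conjug G g ` A)"
    using C.dir[OF Ac B A' assms(12) assms(11) assms(14) assms(13)] by blast
  show ?thesis using e1 e2 d1 d2 by blast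
qed

end
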